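(* Let $0<\omega_1<\omega_2<\cdots$, let $(c_j)$ be a real square-summable sequence with $c_j\ne0$ for all $j$, $\gamma>0$, and $f(\lambda)=\sum_{j}\frac{c_j^2}{\omega_j}\big(\frac1{\lambda-i\omega_j}-\frac1{\lambda+i\omega_j}\big)+\frac{2i}{\gamma\lambda}$. For $k\ge2$ let $F_k(\lambda)=(\lambda-i\omega_k)f(\lambda)$, $\lambda_k^*=i\omega_k-F_k(i\omega_k)/F_k'(i\omega_k)$, and $\rho_k$ be defined by $F_k(\lambda)=F_k(i\omega_k)+(\lambda-i\omega_k)F_k'(i\omega_k)+(\lambda-i\omega_k)^2\rho_k(\lambda)$. Suppose there is $k_1$ such that for every $k\ge k_1$: $\omega_k>1$, $\omega_{k+1}-\omega_k>\omega_k-\omega_{k-1}$, and there are $0<R_1^{(k)}<\omega_k-\omega_{k-1}$ and $R_k>0$ with: $M_k:=\sup_{|\lambda-i\omega_k|\le R_1^{(k)}}|\rho_k(\lambda)|$ satisfies $0<M_k<\frac{\gamma\omega_k|F_k'(i\omega_k)|^3}{c_k^2(\gamma\omega_k|F_k'(i\omega_k)|+1)^2}$; $\sqrt{R_k}\in(b_k-\sqrt{b_k^2-d_k},\,b_k+\sqrt{b_k^2-d_k})$ where $b_k=\sqrt{|F_k'(i\omega_k)|/(4M_k)}$, $d_k=|F_k(i\omega_k)/F_k'(i\omega_k)|$; $R_k\le\frac12|\mathrm{Re}\,\lambda_k^*|$; and $\{|\lambda-\lambda_k^*|<R_k\}\subset\{|\lambda-i\omega_k|\le R_1^{(k)}\}$.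 Let $\lambda_k$ be the unique zero of $f$ in $\{|\lambda-\lambda_k^*|<R_k\}$ (an eigenvalue of the operator $A$ below, as is $\bar\lambda_k$). Then $$\lambda_k=i\omega_k+O(c_k^2),\qquad \bar\lambda_k=-i\omega_k+O(c_k^2)\qquad (k\to\infty).$$
   Context: $A$ is the operator on the complex space $H=\ell^2\times\ell^2$ given by $A(q,p)=(-i\Omega q+\check Aq+\check Ap,\ \check Aq+i\Omega p+\check Ap)$ with $\Omega=\mathrm{diag}(\omega_j)$, $(\check Ax)_j=-\frac\gamma2c_j\sum_\iota c_\iota x_\iota$, domain $\{(q,p):\sum_j\omega_j^2(|q_j|^2+|p_j|^2)<\infty\}$; its eigenvalues off $\{0,\pm i\omega_j\}$ are the zeros of $f$. *)

theory Defs
  imports "HOL-Analysis.Analysis" "HOL-Library.Landau_Symbols"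
begin

text \<open>Sequences are indexed from 1 (index 0 is unused): omega j, c j for j >= 1.\<close>

definition fser :: "(nat \<Rightarrow> real) \<Rightarrow> (nat \<Rightarrow> real) \<Rightarrow> real \<Rightarrow> complex \<Rightarrow> complex" where
  "fser \<omega> c \<gamma> z =
     (\<Sum>j. complex_of_real ((c (Suc j))\<^sup>2 / \<omega> (Suc j)) *
            (1 / (z - \<i> * complex_of_real (\<omega> (Suc j))) - 1 / (z + \<i> * complex_of_real (\<omega> (Suc j)))))
     + 2 * \<i> / (complex_of_real \<gamma> * z)"

text \<open>Poles of f: 0 and +-i omega_j (j >= 1). A zero of f is a point off the poles where f vanishes.\<close>
definition fpoles :: "(nat \<Rightarrow> real) \<Rightarrow> complex set" where
  "fpoles \<omega> = {0} \<union> {\<i> * complex_of_real (\<omega> j) | j. j \<ge> 1} \<union> {- \<i> * complex_of_real (\<omega> j) | j. j \<ge> 1}"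

definition Fk :: "(nat \<Rightarrow> real) \<Rightarrow> (nat \<Rightarrow> real) \<Rightarrow> real \<Rightarrow> nat \<Rightarrow> complex \<Rightarrow> complex" where
  "Fk \<omega> c \<gamma> k z =
     (let a = \<i> * complex_of_real (\<omega> k) in
      if z = a then Lim (at a) (\<lambda>w. (w - a) * fser \<omega> c \<gamma> w)
      else (z - a) * fser \<omega> c \<gamma> z)"

definition dFk :: "(nat \<Rightarrow> real) \<Rightarrow> (nat \<Rightarrow> real) \<Rightarrow> real \<Rightarrow> nat \<Rightarrow> complex" where
  "dFk \<omega> c \<gamma> k = deriv (Fk \<omega> c \<gamma> k) (\<i> * complex_of_real (\<omega> k))"

definition lamstar :: "(nat \<Rightarrow> real) \<Rightarrow> (nat \<Rightarrow> real) \<Rightarrow> real \<Rightarrow> nat \<Rightarrow> complex" where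
  "lamstar \<omega> c \<gamma> k = \<i> * complex_of_real (\<omega> k)
      - Fk \<omega> c \<gamma> k (\<i> * complex_of_real (\<omega> k)) / dFk \<omega> c \<gamma> k"

definition rhok :: "(nat \<Rightarrow> real) \<Rightarrow> (nat \<Rightarrow> real) \<Rightarrow> real \<Rightarrow> nat \<Rightarrow> complex \<Rightarrow> complex" where
  "rhok \<omega> c \<gamma> k z =
     (let a = \<i> * complex_of_real (\<omega> k);
          r = (\<lambda>w. (Fk \<omega> c \<gamma> k w - Fk \<omega> c \<gamma> k a - (w - a) * dFk \<omega> c \<gamma> k) / (w - a)\<^sup>2)
      in if z = a then Lim (at a) r else r z)"

definition Mk :: "(nat \<Rightarrow> real) \<Rightarrow> (nat \<Rightarrow> real) \<Rightarrow> real \<Rightarrow> nat \<Rightarrow> real \<Rightarrow> real" where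
  "Mk \<omega> c \<gamma> k R1 = (SUP z \<in> cball (\<i> * complex_of_real (\<omega> k)) R1. cmod (rhok \<omega> c \<gamma> k z))"

end

theory Submission
  imports Defs
begin

lemma key:
  fixes \<omega> c :: "nat \<Rightarrow> real" and \<gamma> :: real and k :: nat
  assumes pos: "\<And>j. j \<ge> 1 \<Longrightarrow> \<omega> j > 0"
    and inc: "\<And>i j. 1 \<le> i \<Longrightarrow> i \<le> j \<Longrightarrow> \<omega> i \<le> \<omega> j"
    and sinc: "\<And>j. 1 \<le> j \<Longrightarrow> \<omega> j < \<omega> (Suc j)"
    and c_sq: "summable (\<lambda>j. (c j)\<^sup>2)" and gam: "\<gamma> > 0" and k: "k \<ge> 2"
  shows "Fk \<omega> c \<gamma> k (\<i> * complex_of_real (\<omega> k)) = complex_of_real ((c k)\<^sup>2 / \<omega> k)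
     \<and> Re (dFk \<omega> c \<gamma> k) = 2 / (\<gamma> * \<omega> k)"
proof -
  define a where "a = \<i> * complex_of_real (\<omega> k)"
  obtain m where m: "k = Suc m" using k by (cases k) auto
  have m1: "m \<ge> 1" using k m by simp
  define t where "t j z = complex_of_real ((c (Suc j))\<^sup>2 / \<omega> (Suc j)) *
      (1 / (z - \<i> * complex_of_real (\<omega> (Suc j))) - 1 / (z + \<i> * complex_of_real (\<omega> (Suc j))))" for j z
  define C where "C = complex_of_real ((c k)\<^sup>2 / \<omega> k)"
  have fser_eq: "fser \<omega> c \<gamma> z = suminf (\<lambda>j. t j z) + 2 * \<i> / (complex_of_real \<gamma> * z)" for z
    by (simp add: fser_def t_def)
  define \<delta> where "\<delta> = min (\<omega> k - \<omega> (k - 1)) (\<omega> (Suc k) - \<omega> k)"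
  have dpos: "\<delta> > 0" unfolding \<delta>_def using sinc[of m] sinc[of k] m m1 k by auto
  have wk: "\<omega> k > 0" using pos k by simp
  have w1: "\<omega> 1 > 0" using pos by simp
  define r where "r = min (\<delta>/2) (\<omega> k / 2)"
  have rpos: "r > 0" using dpos wk by (simp add: r_def)
  define B where "B j = (c (Suc j))\<^sup>2 / \<omega> 1 * (2/\<delta> + 1/\<omega> 1)" for j
  have "summable (\<lambda>j. (c (Suc j))\<^sup>2)" using c_sq summable_Suc_iff[of "\<lambda>j. (c j)\<^sup>2"] by simp
  then have sB: "summable B" unfolding B_def
    by (intro summable_mult2 summable_divide)
  have geo: "cmod (z - \<i> * complex_of_real (\<omega> (Suc j))) \<ge> \<delta>/2 \<and>
             cmod (z + \<i> * complex_of_real (\<omega> (Suc j))) \<ge> \<omega> (Suc j)"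
    if z: "z \<in> ball a r" and j: "j \<noteq> m" for z j
  proof -
    let ?w = "\<omega> (Suc j)"
    have dz: "cmod (z - a) < r" using z by (simp add: dist_norm norm_minus_commute)
    have gap: "\<bar>\<omega> k - ?w\<bar> \<ge> \<delta>"
    proof (cases "Suc j < k")
      case True
      then have "?w \<le> \<omega> (k - 1)" using inc[of "Suc j" "k-1"] by simp
      then show ?thesis unfolding \<delta>_def by auto
    next
      case False
      then have "Suc j \<ge> Suc k" using j m by auto
      then have "?w \<ge> \<omega> (Suc k)" using inc[of "Suc k" "Suc j"] by simp
      then show ?thesis unfolding \<delta>_def by auto
    qed
    have "cmod (a - \<i> * complex_of_real ?w) = \<bar>\<omega> k - ?w\<bar>"
      unfolding a_def by (simp add: norm_mult flip: right_diff_distrib of_real_diff)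
    moreover have "cmod (a - \<i> * complex_of_real ?w) \<le> cmod (z - \<i> * complex_of_real ?w) + cmod (z - a)"
      by (metis add.commute diff_add_cancel norm_minus_commute norm_triangle_ineq4 add_diff_eq)
    ultimately have 1: "cmod (z - \<i> * complex_of_real ?w) \<ge> \<delta>/2"
      using gap dz unfolding r_def by linarith
    have "\<bar>Im (z - a)\<bar> < r" using dz abs_Im_le_cmod le_less_trans by blast
    then have "- Im (z - a) < r" by (simp only: abs_less_iff)
    moreover have "r \<le> \<omega> k / 2" by (simp add: r_def)
    ultimately have imz: "Im z \<ge> 0" unfolding a_def using wk by simp
    have "cmod (z + \<i> * complex_of_real ?w) \<ge> \<bar>Im (z + \<i> * complex_of_real ?w)\<bar>"
      by (rule abs_Im_le_cmod)
    moreover have "\<bar>Im (z + \<i> * complex_of_real ?w)\<bar> \<ge> ?w" using imz pos[of "Suc j"] by simp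
    ultimately show ?thesis using 1 by linarith
  qed

  have bound: "cmod (t j z) \<le> B j" if z: "z \<in> ball a r" and j: "j \<noteq> m" for z j
  proof -
    let ?w = "\<omega> (Suc j)"
    have g: "cmod (z - \<i> * complex_of_real ?w) \<ge> \<delta>/2" "cmod (z + \<i> * complex_of_real ?w) \<ge> ?w"
      using geo[OF z j] by auto
    have wp: "?w \<ge> \<omega> 1" using inc[of 1 "Suc j"] by simp
    have 1: "cmod (1 / (z - \<i> * complex_of_real ?w)) \<le> 2/\<delta>"
      using g(1) dpos by (simp add: norm_divide divide_simps)
    have 2: "cmod (1 / (z + \<i> * complex_of_real ?w)) \<le> 1/\<omega> 1"
      using g(2) wp w1 by (simp add: norm_divide divide_simps)
    have 3: "cmod (1 / (z - \<i> * complex_of_real ?w) - 1 / (z + \<i> * complex_of_real ?w)) \<le> 2/\<delta> + 1/\<omega> 1"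
      by (rule order_trans[OF norm_triangle_ineq4 add_mono[OF 1 2]])
    have 4: "\<bar>(c (Suc j))\<^sup>2 / ?w\<bar> \<le> (c (Suc j))\<^sup>2 / \<omega> 1"
      using wp w1 by (simp add: frac_le)
    have "cmod (t j z) = \<bar>(c (Suc j))\<^sup>2 / ?w\<bar> * cmod (1 / (z - \<i> * complex_of_real ?w) - 1 / (z + \<i> * complex_of_real ?w))"
      unfolding t_def by (simp only: norm_mult norm_of_real)
    also have "\<dots> \<le> B j" unfolding B_def
      by (rule mult_mono[OF 4 3]) (use dpos w1 in auto)
    finally show ?thesis .
  qed
  define u where "u j z = (if j = m then 0 else t j z)" for j z
  define S where "S z = suminf (\<lambda>j. u j z)" for z
  have ubound: "cmod (u j z) \<le> B j" if "z \<in> ball a r" for j z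
  proof (cases "j = m")
    case True
    then show ?thesis using dpos w1 by (simp add: u_def B_def)
  next
    case False
    then show ?thesis using bound[OF that False] by (simp add: u_def)
  qed
  have ul: "uniform_limit (ball a r) (\<lambda>n z. \<Sum>i<n. u i z) S sequentially"
    unfolding S_def by (rule Weierstrass_m_test[OF ubound sB])
  have ucont: "continuous_on (ball a r) (u i)" for i
  proof (cases "i = m")
    case True
    then show ?thesis by (simp add: u_def)
  next
    case False
    have "continuous_on (ball a r) (t i)" unfolding t_def
    proof (intro continuous_intros ballI)
      fix z assume z: "z \<in> ball a r"
      show "z - \<i> * complex_of_real (\<omega> (Suc i)) \<noteq> 0" using geo[OF z False] dpos by auto
      show "z + \<i> * complex_of_real (\<omega> (Suc i)) \<noteq> 0" using geo[OF z False] pos[of "Suc i"] by auto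
    qed
    then show ?thesis using False by (simp add: u_def)
  qed
  have Scont: "continuous_on (ball a r) S"
    by (rule uniform_limit_theorem[OF _ ul]) (auto intro!: always_eventually allI continuous_on_sum ucont)
  have aball: "a \<in> ball a r" using rpos by simp
  have SisCont: "isCont S a"
    using Scont aball continuous_on_eq_continuous_at by blast
  have usum: "(\<lambda>j. u j z) sums S z" if "z \<in> ball a r" for z
    unfolding S_def by (rule summable_sums, rule summable_comparison_test[OF _ sB]) (use ubound[OF that] in auto)
  have tsum: "(\<lambda>j. t j z) sums (S z + t m z)" if "z \<in> ball a r" for z
  proof -
    have "(\<lambda>j. u j z + (if j = m then t j z else 0)) sums (S z + t m z)"
      by (rule sums_add[OF usum[OF that] sums_single])
    moreover have "(\<lambda>j. u j z + (if j = m then t j z else 0)) = (\<lambda>j. t j z)"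
      by (auto simp: u_def)
    ultimately show ?thesis by simp
  qed
  have tm: "t m z = C * (1/(z - a) - 1/(z + a))" for z
    by (simp add: t_def C_def a_def m)
  define G where "G z = S z - C / (z + a) + 2 * \<i> / (complex_of_real \<gamma> * z)" for z
  define H where "H z = (z - a) * G z + C" for z
  have nz: "z + a \<noteq> 0 \<and> z \<noteq> 0" if "z \<in> ball a r" for z
  proof -
    have "\<bar>Im (z - a)\<bar> < r" using that abs_Im_le_cmod le_less_trans
      by (metis dist_norm mem_ball norm_minus_commute)
    then have "- Im (z - a) < r" by (simp only: abs_less_iff)
    moreover have "r \<le> \<omega> k / 2" by (simp add: r_def)
    ultimately have "Im z > 0" unfolding a_def using wk by simp
    moreover have "Im (z + a) > 0" using \<open>Im z > 0\<close> wk unfolding a_def by simp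
    ultimately show ?thesis by (metis add_pos_pos less_irrefl zero_complex.sel(2))
  qed

  have fser_ball: "fser \<omega> c \<gamma> z = S z + t m z + 2 * \<i> / (complex_of_real \<gamma> * z)" if "z \<in> ball a r" for z
    using fser_eq[of z] sums_unique[OF tsum[OF that]] by simp
  have HFeq: "(z - a) * fser \<omega> c \<gamma> z = H z" if z: "z \<in> ball a r" and za: "z \<noteq> a" for z
  proof -
    have "z + a \<noteq> 0" "z \<noteq> 0" using nz[OF z] by auto
    moreover have "z - a \<noteq> 0" using za by simp
    have e1: "(z - a) * (C * (1/(z-a))) = C" using za by simp
    have "(z - a) * (S z + C * (1/(z-a) - 1/(z+a)) + 2 * \<i> / (complex_of_real \<gamma> * z))
       = (z - a) * (S z - C/(z+a) + 2 * \<i> / (complex_of_real \<gamma> * z)) + (z - a) * (C * (1/(z-a)))"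
      by (simp add: algebra_simps)
    then show ?thesis unfolding fser_ball[OF z] tm H_def G_def using e1 by simp
  qed
  have GisCont: "isCont G a"
  proof -
    have "a + a \<noteq> 0" "a \<noteq> 0" using nz[OF aball] by auto
    then show ?thesis unfolding G_def using SisCont gam
      by (intro continuous_intros) auto
  qed
  have HisCont: "isCont H a" unfolding H_def using GisCont by (intro continuous_intros)
  have Ha: "H a = C" by (simp add: H_def)
  have evH: "eventually (\<lambda>w. (w - a) * fser \<omega> c \<gamma> w = H w) (at a)"
  proof -
    have "eventually (\<lambda>w. w \<in> ball a r) (at a)"
      using aball by (intro eventually_at_in_open') auto
    then show ?thesis unfolding eventually_at_filter
      by eventually_elim (use HFeq in auto)
  qed
  have lim: "((\<lambda>w. (w - a) * fser \<omega> c \<gamma> w) \<longlongrightarrow> C) (at a)"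
  proof -
    have "(H \<longlongrightarrow> C) (at a)" using HisCont Ha by (simp add: isCont_def)
    then show ?thesis using evH by (simp add: tendsto_cong)
  qed
  have FkC: "Fk \<omega> c \<gamma> k a = C"
    unfolding Fk_def Let_def a_def[symmetric] using tendsto_Lim[OF _ lim] by simp
  have FkH: "Fk \<omega> c \<gamma> k z = H z" if "z \<in> ball a r" for z
  proof (cases "z = a")
    case True
    then show ?thesis using FkC Ha by simp
  next
    case False
    then show ?thesis unfolding Fk_def Let_def a_def[symmetric] using HFeq[OF that False] by simp
  qed
  have Hder: "(H has_field_derivative G a) (at a)"
  proof -
    have "((\<lambda>y. (H y - H a) / (y - a)) \<longlongrightarrow> G a) (at a)"
    proof -
      have "(G \<longlongrightarrow> G a) (at a)" using GisCont by (simp add: isCont_def)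
      moreover have "eventually (\<lambda>y. G y = (H y - H a) / (y - a)) (at a)"
        unfolding eventually_at_filter by (auto simp: H_def)
      ultimately show ?thesis by (simp add: tendsto_cong)
    qed
    then show ?thesis by (simp add: has_field_derivative_iff)
  qed
  have dF: "dFk \<omega> c \<gamma> k = G a"
  proof -
    have "eventually (\<lambda>z. Fk \<omega> c \<gamma> k z = H z) (nhds a)"
    proof -
      have "eventually (\<lambda>z. z \<in> ball a r) (nhds a)" using aball by (intro eventually_nhds_in_open) auto
      then show ?thesis by (rule eventually_mono) (rule FkH)
    qed
    then have "deriv (Fk \<omega> c \<gamma> k) a = deriv H a" by (rule deriv_cong_ev) simp
    also have "\<dots> = G a" by (rule DERIV_imp_deriv[OF Hder])
    finally show ?thesis unfolding dFk_def a_def .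
  qed

  have ReS: "Re (S a) = 0"
  proof -
    have "(\<lambda>j. Re (u j a)) sums Re (S a)" using sums_Re[OF usum[OF aball]] .
    moreover have "Re (u j a) = 0" for j
      unfolding u_def t_def a_def by (simp add: Re_divide)
    ultimately show ?thesis by (simp add: sums_iff)
  qed
  have ReG: "Re (G a) = 2 / (\<gamma> * \<omega> k)"
    unfolding G_def using ReS wk gam unfolding a_def C_def by (simp add: Re_divide power2_eq_square)
  show ?thesis using FkC ReG dF unfolding a_def C_def by simp
qed
theorem proposition3p3:
  fixes \<omega> c :: "nat \<Rightarrow> real" and \<gamma> :: real and k1 :: nat
    and R1 R :: "nat \<Rightarrow> real" and lam :: "nat \<Rightarrow> complex"
  assumes om_pos: "\<omega> 1 > 0"
    and om_inc: "\<And>j. j \<ge> 1 \<Longrightarrow> \<omega> j < \<omega> (Suc j)"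
    and c_sq: "summable (\<lambda>j. (c j)\<^sup>2)"
    and c_nz: "\<And>j. j \<ge> 1 \<Longrightarrow> c j \<noteq> 0"
    and gam: "\<gamma> > 0"
    and k1: "k1 \<ge> 2"
    and om_gt1: "\<And>k. k \<ge> k1 \<Longrightarrow> \<omega> k > 1"
    and gaps: "\<And>k. k \<ge> k1 \<Longrightarrow> \<omega> (Suc k) - \<omega> k > \<omega> k - \<omega> (k - 1)"
    and R1_pos: "\<And>k. k \<ge> k1 \<Longrightarrow> 0 < R1 k \<and> R1 k < \<omega> k - \<omega> (k - 1)"
    and R_pos: "\<And>k. k \<ge> k1 \<Longrightarrow> R k > 0"
    and M_bounds: "\<And>k. k \<ge> k1 \<Longrightarrow>
        0 < Mk \<omega> c \<gamma> k (R1 k) \<and>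
        Mk \<omega> c \<gamma> k (R1 k) < \<gamma> * \<omega> k * (cmod (dFk \<omega> c \<gamma> k)) ^ 3
            / ((c k)\<^sup>2 * (\<gamma> * \<omega> k * cmod (dFk \<omega> c \<gamma> k) + 1)\<^sup>2)"
    and R_interval: "\<And>k. k \<ge> k1 \<Longrightarrow>
        (let b = sqrt (cmod (dFk \<omega> c \<gamma> k) / (4 * Mk \<omega> c \<gamma> k (R1 k)));
             d = cmod (Fk \<omega> c \<gamma> k (\<i> * complex_of_real (\<omega> k)) / dFk \<omega> c \<gamma> k)
         in b - sqrt (b\<^sup>2 - d) < sqrt (R k) \<and> sqrt (R k) < b + sqrt (b\<^sup>2 - d))"
    and R_re: "\<And>k. k \<ge> k1 \<Longrightarrow> R k \<le> \<bar>Re (lamstar \<omega> c \<gamma> k)\<bar> / 2"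
    and R_ball: "\<And>k. k \<ge> k1 \<Longrightarrow>
        ball (lamstar \<omega> c \<gamma> k) (R k) \<subseteq> cball (\<i> * complex_of_real (\<omega> k)) (R1 k)"
    and lam_zero: "\<And>k. k \<ge> k1 \<Longrightarrow>
        lam k \<in> ball (lamstar \<omega> c \<gamma> k) (R k) \<and> lam k \<notin> fpoles \<omega> \<and> fser \<omega> c \<gamma> (lam k) = 0"
  shows "(\<lambda>k. lam k - \<i> * complex_of_real (\<omega> k)) \<in> O(\<lambda>k. complex_of_real ((c k)\<^sup>2)) \<and>
         (\<lambda>k. cnj (lam k) + \<i> * complex_of_real (\<omega> k)) \<in> O(\<lambda>k. complex_of_real ((c k)\<^sup>2))"
  proof -
  have pos: "\<omega> j > 0" if "j \<ge> 1" for j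
    using that
  proof (induction j rule: dec_induct)
    case base then show ?case using om_pos by simp
  next
    case (step n) then show ?case using om_inc[of n] by simp
  qed
  have inc: "\<omega> i \<le> \<omega> j" if "1 \<le> i" "i \<le> j" for i j
    using that(2)
  proof (induction j rule: dec_induct)
    case base then show ?case by simp
  next
    case (step n) then show ?case using om_inc[of n] that(1) by simp
  qed
  have est: "cmod (lam k - \<i> * complex_of_real (\<omega> k)) \<le> 3 * \<gamma> / 4 * (c k)\<^sup>2" if kk: "k \<ge> k1" for k
  proof -
    define a where "a = \<i> * complex_of_real (\<omega> k)"
    define F where "F = Fk \<omega> c \<gamma> k a"
    define D where "D = dFk \<omega> c \<gamma> k"
    have k2: "k \<ge> 2" using kk k1 by simp
    have wk: "\<omega> k > 0" using pos k2 by simp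
    from key[of \<omega> c \<gamma> k, OF pos inc om_inc c_sq gam k2]
    have FC: "F = complex_of_real ((c k)\<^sup>2 / \<omega> k)" and ReD: "Re D = 2 / (\<gamma> * \<omega> k)"
      unfolding F_def D_def a_def by auto
    have Dpos: "cmod D \<ge> 2 / (\<gamma> * \<omega> k)" using ReD complex_Re_le_cmod by metis
    have Dp: "2 / (\<gamma> * \<omega> k) > 0" using gam wk by simp
    have "cmod (F / D) = (c k)\<^sup>2 / \<omega> k / cmod D" using wk unfolding FC norm_divide norm_of_real by simp
    also have "\<dots> \<le> (c k)\<^sup>2 / \<omega> k / (2 / (\<gamma> * \<omega> k))"
      using Dpos Dp wk by (intro divide_left_mono mult_pos_pos) auto
    also have "\<dots> = \<gamma> / 2 * (c k)\<^sup>2" using wk by (simp add: field_simps)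
    finally have d: "cmod (F / D) \<le> \<gamma> / 2 * (c k)\<^sup>2" .
    have ls: "lamstar \<omega> c \<gamma> k = a - F / D" unfolding lamstar_def F_def D_def a_def by simp
    have "\<bar>Re (lamstar \<omega> c \<gamma> k)\<bar> = \<bar>Re (F / D)\<bar>" unfolding ls a_def by simp
    also have "\<dots> \<le> cmod (F / D)" by (rule abs_Re_le_cmod)
    finally have Rb: "R k \<le> cmod (F / D) / 2" using R_re[OF kk] by simp
    have "dist (lam k) (lamstar \<omega> c \<gamma> k) < R k" using lam_zero[OF kk] by (simp add: dist_commute)
    then have l1: "cmod (lam k - lamstar \<omega> c \<gamma> k) < R k" by (simp add: dist_norm)
    have "cmod (lam k - a) \<le> cmod (lam k - lamstar \<omega> c \<gamma> k) + cmod (lamstar \<omega> c \<gamma> k - a)"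
      by (metis norm_triangle_ineq diff_add_cancel add_diff_eq diff_diff_eq2)
    also have "cmod (lamstar \<omega> c \<gamma> k - a) = cmod (F / D)" unfolding ls by simp
    finally show ?thesis using l1 Rb d unfolding a_def by linarith
  qed
  have ev: "eventually (\<lambda>k. cmod (lam k - \<i> * complex_of_real (\<omega> k)) \<le> 3 * \<gamma> / 4 * norm (complex_of_real ((c k)\<^sup>2))) at_top"
  proof (rule eventually_at_top_linorderI[of k1])
    fix k assume "k \<ge> k1"
    moreover have "norm (complex_of_real ((c k)\<^sup>2)) = (c k)\<^sup>2" by (simp only: norm_of_real abs_power2)
    ultimately show "cmod (lam k - \<i> * complex_of_real (\<omega> k)) \<le> 3 * \<gamma> / 4 * norm (complex_of_real ((c k)\<^sup>2))"
      using est by simp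
  qed
  have 1: "(\<lambda>k. lam k - \<i> * complex_of_real (\<omega> k)) \<in> O(\<lambda>k. complex_of_real ((c k)\<^sup>2))"
    by (rule bigoI[OF ev])
  have "cnj (lam k) + \<i> * complex_of_real (\<omega> k) = cnj (lam k - \<i> * complex_of_real (\<omega> k))" for k
    by simp
  then have eqn: "cmod (cnj (lam k) + \<i> * complex_of_real (\<omega> k)) = cmod (lam k - \<i> * complex_of_real (\<omega> k))" for k
    by (simp only: complex_mod_cnj)
  have ev2: "eventually (\<lambda>k. cmod (cnj (lam k) + \<i> * complex_of_real (\<omega> k)) \<le> 3 * \<gamma> / 4 * norm (complex_of_real ((c k)\<^sup>2))) at_top"
    using ev by (rule eventually_mono) (simp only: eqn)
  have 2: "(\<lambda>k. cnj (lam k) + \<i> * complex_of_real (\<omega> k)) \<in> O(\<lambda>k. complex_of_real ((c k)\<^sup>2))"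
    by (rule bigoI[OF ev2])
  show ?thesis using 1 2 by simp
qed

end
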